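(* Let $S$ be an entropy function for a finite set $X$. Given a function $\mu:2^X\to[0,\infty)$, there exist subsets $A_1\subset\cdots\subset A_m$ of $X$ and a function $\mu':2^X\to[0,\infty)$ supported on $\{A_1,\dots,A_m\}$ such that $\phi_{\mu'}=\phi_\mu$ and \[\sum_{i=1}^m\mu'(A_i)S(A_i)\le\sum_{A\subseteq X}\mu(A)S(A).\]
   Context: An entropy function for a finite set $X$ is a function $S:2^X\to[0,\infty)$ with $S(\emptyset)=0$, $S(A)+S(B)\ge S(A\cap B)+S(A\cup B)$ and $S(A)+S(B)\ge S(A\setminus B)+S(B\setminus A)$ for all $A,B\subseteq X$. For $\mu:2^X\to\mathbb R$, $\phi_\mu:X\to\mathbb R$ is defined by $\phi_\mu(x):=\sum_{A\ni x}\mu(A)$. *)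

theory Defs
  imports Complex_Main
begin

definition entropy_function :: "'a set \<Rightarrow> ('a set \<Rightarrow> real) \<Rightarrow> bool" where
  "entropy_function X S \<longleftrightarrow>
     (\<forall>A\<in>Pow X. S A \<ge> 0) \<and> S {} = 0 \<and>
     (\<forall>A\<in>Pow X. \<forall>B\<in>Pow X. S A + S B \<ge> S (A \<inter> B) + S (A \<union> B)) \<and>
     (\<forall>A\<in>Pow X. \<forall>B\<in>Pow X. S A + S B \<ge> S (A - B) + S (B - A))"

definition phi :: "'a set \<Rightarrow> ('a set \<Rightarrow> real) \<Rightarrow> 'a \<Rightarrow> real" where
  "phi X \<mu> x = (\<Sum>A\<in>{A. A \<subseteq> X \<and> x \<in> A}. \<mu> A)"

end

theory Submission
  imports Defs
begin

lemma abel_aux: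
  fixes F G :: "nat \<Rightarrow> real"
  shows "(\<Sum>i<n. (F i - F (Suc i)) * G (Suc i)) =
         (\<Sum>i<n. F i * (G (Suc i) - G i)) + F 0 * G 0 - F n * G n"
  by (induction n) (auto simp: algebra_simps)

lemma mem_take_nth:
  assumes "distinct xs" "j < length xs"
  shows "xs ! j \<in> set (take k xs) \<longleftrightarrow> j < k"
proof
  assume "xs ! j \<in> set (take k xs)"
  then obtain i where i: "i < length (take k xs)" "take k xs ! i = xs ! j"
    by (auto simp: in_set_conv_nth)
  then have "xs ! i = xs ! j" "i < k" "i < length xs" by auto
  with assms have "i = j" using nth_eq_iff_index_eq by blast
  with i show "j < k" by auto
next
  assume "j < k"
  with assms show "xs ! j \<in> set (take k xs)"
    by (metis in_set_conv_nth length_take min_less_iff_conj nth_take)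
qed

theorem lemma31:
  fixes X :: "'a set" and S :: "'a set \<Rightarrow> real" and \<mu> :: "'a set \<Rightarrow> real"
  assumes "finite X"
    and "entropy_function X S"
    and "\<forall>A\<in>Pow X. \<mu> A \<ge> 0"
  shows "\<exists>As :: 'a set list. \<exists>\<mu>' :: 'a set \<Rightarrow> real.
           sorted_wrt (\<subset>) As \<and> (\<forall>A\<in>set As. A \<subseteq> X) \<and>
           (\<forall>A\<in>Pow X. \<mu>' A \<ge> 0) \<and>
           (\<forall>A\<in>Pow X. A \<notin> set As \<longrightarrow> \<mu>' A = 0) \<and>
           (\<forall>x\<in>X. phi X \<mu>' x = phi X \<mu> x) \<and>
           (\<Sum>i<length As. \<mu>' (As ! i) * S (As ! i)) \<le> (\<Sum>A\<in>Pow X. \<mu> A * S A)"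
proof -
  define f where "f = phi X \<mu>"
  have fX: "f x = (\<Sum>A\<in>Pow X. if x \<in> A then \<mu> A else 0)" for x
  proof -
    have "{A. A \<subseteq> X \<and> x \<in> A} = {A \<in> Pow X. x \<in> A}" by auto
    then show ?thesis unfolding f_def phi_def using assms(1)
      by (simp add: sum.inter_filter[symmetric])
  qed
  have f0: "f x \<ge> 0" for x
    unfolding fX using assms(3) by (intro sum_nonneg) auto
  have S0: "S {} = 0" and Ssub: "\<And>A B. A \<subseteq> X \<Longrightarrow> B \<subseteq> X \<Longrightarrow> S (A \<inter> B) + S (A \<union> B) \<le> S A + S B"
    using assms(2) unfolding entropy_function_def by auto
  obtain ys where ys: "distinct ys" "set ys = X" using finite_distinct_list[OF assms(1)] by blast
  define xs where "xs = sort_key (\<lambda>x. - f x) ys"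
  have dxs: "distinct xs" and sxs: "set xs = X" using ys unfolding xs_def by auto
  have srt: "sorted (map (\<lambda>x. - f x) xs)" unfolding xs_def by simp
  define n where "n = length xs"
  have mono: "i \<le> j \<Longrightarrow> j < n \<Longrightarrow> f (xs ! j) \<le> f (xs ! i)" for i j
    using srt unfolding sorted_iff_nth_mono n_def by fastforce
  define F where "F i = (if i < n then f (xs ! i) else 0)" for i
  define w where "w i = F i - F (Suc i)" for i
  define P where "P k = set (take k xs)" for k
  define As where "As = map (\<lambda>i. P (Suc i)) [0..<n]"
  define \<mu>' where "\<mu>' A = (\<Sum>i<n. if A = P (Suc i) then w i else 0)" for A
  have w0: "w i \<ge> 0" for i
    unfolding w_def F_def using mono[of i "Suc i"] f0 by auto
  have PX: "P k \<subseteq> X" for k unfolding P_def using sxs by (meson set_take_subset)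
  have memP: "j < n \<Longrightarrow> xs ! j \<in> P k \<longleftrightarrow> j < k" for j k
    unfolding P_def n_def by (rule mem_take_nth[OF dxs])
  have cardP: "k \<le> n \<Longrightarrow> card (P k) = k" for k
    unfolding P_def n_def using dxs by (simp add: distinct_card)
  have Pinj: "i < n \<Longrightarrow> j < n \<Longrightarrow> P (Suc i) = P (Suc j) \<Longrightarrow> i = j" for i j
    using cardP[of "Suc i"] cardP[of "Suc j"] by (metis Suc_inject Suc_leI)
  have lenAs: "length As = n" unfolding As_def by simp
  have Asnth: "i < n \<Longrightarrow> As ! i = P (Suc i)" for i unfolding As_def by simp
  have c1: "sorted_wrt (\<subset>) As"
    unfolding sorted_wrt_iff_nth_less lenAs
  proof (intro allI impI)
    fix i j assume ij: "i < j" "j < n"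
    have "P (Suc i) \<subseteq> P (Suc j)" unfolding P_def using ij
      by (simp add: set_take_subset_set_take)
    moreover have "xs ! j \<in> P (Suc j)" "xs ! j \<notin> P (Suc i)" using memP ij by auto
    ultimately show "As ! i \<subset> As ! j" using ij Asnth by auto
  qed
  have c2: "\<forall>A\<in>set As. A \<subseteq> X" unfolding As_def using PX by auto
  have c3: "\<forall>A\<in>Pow X. \<mu>' A \<ge> 0" unfolding \<mu>'_def using w0 by (auto intro: sum_nonneg)
  have c4: "\<forall>A\<in>Pow X. A \<notin> set As \<longrightarrow> \<mu>' A = 0"
    unfolding \<mu>'_def As_def by (auto intro!: sum.neutral)
  have c5: "\<forall>x\<in>X. phi X \<mu>' x = phi X \<mu> x"
  proof
    fix x assume "x \<in> X"
    then obtain j where j: "j < n" "x = xs ! j" using sxs unfolding n_def by (metis in_set_conv_nth)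
    have "phi X \<mu>' x = (\<Sum>i<n. \<Sum>A\<in>{A. A \<subseteq> X \<and> x \<in> A}. if A = P (Suc i) then w i else 0)"
      unfolding phi_def \<mu>'_def by (rule sum.swap)
    also have "\<dots> = (\<Sum>i<n. if x \<in> P (Suc i) then w i else 0)"
      using assms(1) PX by (intro sum.cong refl) (auto simp: sum.delta finite_subset)
    also have "\<dots> = (\<Sum>i\<in>{j..<n}. w i)"
      using j memP by (intro sum.mono_neutral_cong_right) auto
    also have "\<dots> = F j - F n"
    proof -
      have "(\<Sum>i\<in>{j..<n}. F i - F (Suc i)) = - (\<Sum>i\<in>{j..<n}. F (Suc i) - F i)"
        by (simp add: sum_negf[symmetric])
      then show ?thesis using sum_Suc_diff'[of j n F] j by (simp add: w_def)
    qed
    also have "\<dots> = f x" using j unfolding F_def by simp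
    finally show "phi X \<mu>' x = phi X \<mu> x" unfolding f_def .
  qed
  define y where "y i = S (P (Suc i)) - S (P i)" for i
  have Pins: "k < n \<Longrightarrow> P (Suc k) = insert (xs ! k) (P k)" for k
    unfolding P_def n_def by (simp add: take_Suc_conv_app_nth)
  have ybound: "k \<le> n \<Longrightarrow> (\<Sum>i<k. if xs ! i \<in> A then y i else 0) \<le> S (A \<inter> P k)"
    if AX: "A \<subseteq> X" for A k
  proof (induction k)
    case 0 then show ?case by (simp add: P_def S0)
  next
    case (Suc k)
    have kn: "k < n" using Suc.prems by simp
    have IH: "(\<Sum>i<k. if xs ! i \<in> A then y i else 0) \<le> S (A \<inter> P k)"
      using Suc.IH kn by simp
    show ?case
    proof (cases "xs ! k \<in> A")
      case False
      then have "A \<inter> P (Suc k) = A \<inter> P k" using Pins[OF kn] by auto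
      then show ?thesis using IH False by simp
    next
      case True
      have e1: "(A \<inter> P (Suc k)) \<inter> P k = A \<inter> P k" using Pins[OF kn] by auto
      have e2: "(A \<inter> P (Suc k)) \<union> P k = P (Suc k)" using Pins[OF kn] True by auto
      have "S ((A \<inter> P (Suc k)) \<inter> P k) + S ((A \<inter> P (Suc k)) \<union> P k) \<le> S (A \<inter> P (Suc k)) + S (P k)"
        by (rule Ssub) (use AX PX in auto)
      then have "S (A \<inter> P k) + S (P (Suc k)) \<le> S (A \<inter> P (Suc k)) + S (P k)" using e1 e2 by simp
      then show ?thesis using IH True unfolding y_def by simp
    qed
  qed
  have PnX: "P n = X" unfolding P_def n_def using sxs by simp
  have lhs: "(\<Sum>i<length As. \<mu>' (As ! i) * S (As ! i)) = (\<Sum>i<n. F i * y i)"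
  proof -
    have "(\<Sum>i<length As. \<mu>' (As ! i) * S (As ! i)) = (\<Sum>i<n. w i * S (P (Suc i)))"
      unfolding lenAs
    proof (rule sum.cong[OF refl])
      fix i assume i: "i \<in> {..<n}"
      then have iN: "i < n" by simp
      have "\<mu>' (P (Suc i)) = (\<Sum>j<n. if j = i then w i else 0)" unfolding \<mu>'_def
      proof (rule sum.cong[OF refl])
        fix j assume "j \<in> {..<n}"
        then have "j < n" by simp
        then show "(if P (Suc i) = P (Suc j) then w j else 0) = (if j = i then w i else 0)"
          using Pinj[OF iN \<open>j < n\<close>] by auto
      qed
      also have "\<dots> = w i" using iN by simp
      finally have "\<mu>' (P (Suc i)) = w i" .
      then show "\<mu>' (As ! i) * S (As ! i) = w i * S (P (Suc i))" using iN Asnth by auto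
    qed
    also have "\<dots> = (\<Sum>i<n. F i * y i)"
    proof -
      have "(\<Sum>i<n. w i * S (P (Suc i))) = (\<Sum>i<n. F i * (S (P (Suc i)) - S (P i))) + F 0 * S (P 0) - F n * S (P n)"
        unfolding w_def by (rule abel_aux)
      moreover have "F n = 0" unfolding F_def by simp
      moreover have "S (P 0) = 0" unfolding P_def using S0 by simp
      ultimately show ?thesis unfolding y_def by simp
    qed
    finally show ?thesis .
  qed
  have "(\<Sum>i<n. F i * y i) = (\<Sum>i<n. y i * (\<Sum>A\<in>Pow X. if xs ! i \<in> A then \<mu> A else 0))"
    by (intro sum.cong refl) (simp add: F_def fX mult.commute)
  also have "\<dots> = (\<Sum>A\<in>Pow X. \<mu> A * (\<Sum>i<n. if xs ! i \<in> A then y i else 0))"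
  proof -
    have "(\<Sum>i<n. y i * (\<Sum>A\<in>Pow X. if xs ! i \<in> A then \<mu> A else 0))
        = (\<Sum>i<n. \<Sum>A\<in>Pow X. \<mu> A * (if xs ! i \<in> A then y i else 0))"
      unfolding sum_distrib_left by (intro sum.cong refl) simp
    also have "\<dots> = (\<Sum>A\<in>Pow X. \<Sum>i<n. \<mu> A * (if xs ! i \<in> A then y i else 0))"
      by (rule sum.swap)
    also have "\<dots> = (\<Sum>A\<in>Pow X. \<mu> A * (\<Sum>i<n. if xs ! i \<in> A then y i else 0))"
      unfolding sum_distrib_left by (rule refl)
    finally show ?thesis .
  qed
  also have "\<dots> \<le> (\<Sum>A\<in>Pow X. \<mu> A * S A)"
  proof (rule sum_mono)
    fix A assume A: "A \<in> Pow X"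
    have "(\<Sum>i<n. if xs ! i \<in> A then y i else 0) \<le> S (A \<inter> P n)" using A ybound[of A n] by simp
    also have "A \<inter> P n = A" using A PnX by auto
    finally show "\<mu> A * (\<Sum>i<n. if xs ! i \<in> A then y i else 0) \<le> \<mu> A * S A"
      using assms(3) A by (simp add: mult_left_mono)
  qed
  finally have c6: "(\<Sum>i<length As. \<mu>' (As ! i) * S (As ! i)) \<le> (\<Sum>A\<in>Pow X. \<mu> A * S A)"
    unfolding lhs .
  show ?thesis using c1 c2 c3 c4 c5 c6 by blast
qed

end
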